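(* Let $\Omega\subset\mathbb{R}^d$ be a bounded Lipschitz domain, $0<\alpha\le1$, $\delta,M_1,M_2>0$, and let $\varrho=\varrho(\Omega,\delta,M_1,M_2,\alpha)>0$ be the radius of guaranteed local injectivity described in the context. Then for every $0<\gamma<\frac{\varrho}{2}$ there exists $\lambda>0$, depending only on $\gamma,d,\Omega,\delta,\alpha,M_1,M_2$ (and not on the maps below), such that for all $y,z\in C^{1,\alpha}(\Omega;\mathbb{R}^d)$ that both satisfy $\det\nabla(\cdot)\ge\delta$, $|\nabla(\cdot)|\le M_1$ on $\Omega$ and $\|\nabla(\cdot)\|_{C^\alpha(\Omega)}\le M_2$, and with $\|y-z\|_{L^\infty}\le\lambda$, we have $$\tilde P^{(\gamma)}_y(0)\subset P_z(0),$$ where $$\tilde P^{(\gamma)}_y(0):=\{x_1\in\Omega:\ \exists x_2\in\Omega\text{ with }\operatorname{dist}(x_2,\partial\Omega)>\gamma,\ y(x_1)=y(x_2),\ |x_1-x_2|>\tfrac{\varrho}{2}+\gamma\},$$ $$P_z(0):=\{x\in\Omega:\ \exists\tilde x\in\Omega\text{ with } z(x)=z(\tilde x)\text{ and }|x-\tilde x|>\tfrac{\varrho}{2}\}.$$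
   Context: The radius $\varrho>0$ depends only on $\Omega,\delta,M_1,M_2,\alpha$ and has the property that every $y\in C^{1,\alpha}(\Omega;\mathbb{R}^d)$ with $\det\nabla y\ge\delta$, $|\nabla y|\le M_1$, $\|\nabla y\|_{C^\alpha(\Omega)}\le M_2$ is injective on $B_\varrho(\bar x)\cap\Omega$ for every $\bar x\in\bar\Omega$, with $\frac12\frac{\delta}{M_1^{d-1}}|x_1-x_2|\le|y(x_1)-y(x_2)|\le M_1\sqrt{1+L^2}|x_1-x_2|$ for $x_1,x_2\in B_\varrho(\bar x)\cap\Omega$ ($L$ bounding the local Lipschitz constants of $\partial\Omega$). Norms are Euclidean. *)

theory Defs
  imports "HOL-Analysis.Analysis"
begin

definition lipschitz_domain :: "(real^'n) set \<Rightarrow> real \<Rightarrow> bool" where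
  "lipschitz_domain \<Omega> L \<longleftrightarrow> open \<Omega> \<and> bounded \<Omega> \<and> connected \<Omega> \<and> \<Omega> \<noteq> {} \<and> 0 \<le> L \<and>
     (\<forall>p\<in>frontier \<Omega>. \<exists>r>0. \<exists>e::real^'n. norm e = 1 \<and>
        (\<exists>g::real^'n \<Rightarrow> real. L-lipschitz_on {v. v \<bullet> e = 0} g \<and>
           ball p r \<inter> \<Omega> = {x \<in> ball p r. x \<bullet> e < g (x - (x \<bullet> e) *\<^sub>R e)}))"

definition grad :: "(real^'n \<Rightarrow> real^'n) \<Rightarrow> real^'n \<Rightarrow> real^'n^'n" where
  "grad y x = matrix (frechet_derivative y (at x))"

text \<open>C^alpha norm of a matrix field on \<Omega>: sup norm plus alpha-Hoelder seminorm (in ereal;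
  Euclidean = Frobenius norm on matrices).\<close>
definition holder_norm :: "(real^'n) set \<Rightarrow> real \<Rightarrow> (real^'n \<Rightarrow> real^'n^'n) \<Rightarrow> ereal" where
  "holder_norm \<Omega> \<alpha> F =
     (SUP x\<in>\<Omega>. ereal (norm (F x))) +
     (SUP p\<in>{(x, x'). x \<in> \<Omega> \<and> x' \<in> \<Omega> \<and> x \<noteq> x'}.
        ereal (norm (F (fst p) - F (snd p)) / (dist (fst p) (snd p)) powr \<alpha>))"

definition C1_alpha :: "(real^'n) set \<Rightarrow> real \<Rightarrow> (real^'n \<Rightarrow> real^'n) \<Rightarrow> bool" where
  "C1_alpha \<Omega> \<alpha> y \<longleftrightarrow> y differentiable_on \<Omega> \<and> holder_norm \<Omega> \<alpha> (grad y) < \<infinity>"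

definition admissible :: "(real^'n) set \<Rightarrow> real \<Rightarrow> real \<Rightarrow> real \<Rightarrow> real \<Rightarrow> (real^'n \<Rightarrow> real^'n) \<Rightarrow> bool" where
  "admissible \<Omega> \<alpha> \<delta> M1 M2 y \<longleftrightarrow> C1_alpha \<Omega> \<alpha> y \<and>
     (\<forall>x\<in>\<Omega>. det (grad y x) \<ge> \<delta> \<and> norm (grad y x) \<le> M1) \<and>
     holder_norm \<Omega> \<alpha> (grad y) \<le> ereal M2"

definition injectivity_radius :: "(real^'n) set \<Rightarrow> real \<Rightarrow> real \<Rightarrow> real \<Rightarrow> real \<Rightarrow> real \<Rightarrow> real \<Rightarrow> bool" where
  "injectivity_radius \<Omega> L \<alpha> \<delta> M1 M2 \<rho> \<longleftrightarrow> \<rho> > 0 \<and>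
     (\<forall>y. admissible \<Omega> \<alpha> \<delta> M1 M2 y \<longrightarrow>
       (\<forall>xb\<in>closure \<Omega>. inj_on y (ball xb \<rho> \<inter> \<Omega>) \<and>
          (\<forall>x1\<in>ball xb \<rho> \<inter> \<Omega>. \<forall>x2\<in>ball xb \<rho> \<inter> \<Omega>.
             (1/2) * (\<delta> / M1 ^ (CARD('n) - 1)) * dist x1 x2 \<le> dist (y x1) (y x2) \<and>
             dist (y x1) (y x2) \<le> M1 * sqrt (1 + L\<^sup>2) * dist x1 x2)))"

definition P_tilde :: "(real^'n) set \<Rightarrow> real \<Rightarrow> real \<Rightarrow> (real^'n \<Rightarrow> real^'n) \<Rightarrow> (real^'n) set" where
  "P_tilde \<Omega> \<rho> \<gamma> y = {x1 \<in> \<Omega>. \<exists>x2\<in>\<Omega>. infdist x2 (frontier \<Omega>) > \<gamma> \<and> y x1 = y x2 \<and>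
       dist x1 x2 > \<rho> / 2 + \<gamma>}"

definition P0 :: "(real^'n) set \<Rightarrow> real \<Rightarrow> (real^'n \<Rightarrow> real^'n) \<Rightarrow> (real^'n) set" where
  "P0 \<Omega> \<rho> z = {x \<in> \<Omega>. \<exists>xt\<in>\<Omega>. z x = z xt \<and> dist x xt > \<rho> / 2}"

end

theory Submission
  imports Defs
begin

lemma ball_in_domain:
  fixes \<Omega> :: "(real^'n) set"
  assumes "x2 \<in> \<Omega>" "infdist x2 (frontier \<Omega>) > g" "0 < g"
  shows "ball x2 g \<subseteq> \<Omega>"
proof (rule ccontr)
  assume "\<not> ball x2 g \<subseteq> \<Omega>"
  then have "ball x2 g - \<Omega> \<noteq> {}" by blast
  moreover have "x2 \<in> ball x2 g \<inter> \<Omega>" using assms by simp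
  ultimately obtain p where p: "p \<in> ball x2 g" "p \<in> frontier \<Omega>"
    using connected_Int_frontier[OF connected_ball, of x2 g \<Omega>] by blast
  then have "infdist x2 (frontier \<Omega>) \<le> dist x2 p" by (simp add: infdist_le)
  with p assms show False by auto
qed

lemma cover_ball:
  fixes z :: "real^'n \<Rightarrow> real^'n"
  assumes cont: "continuous_on (cball x r) z" and r: "0 < r"
    and low: "\<And>a b. a \<in> cball x r \<Longrightarrow> b \<in> cball x r \<Longrightarrow> c * dist a b \<le> dist (z a) (z b)"
    and c: "0 < c"
  shows "ball (z x) (c * r) \<subseteq> z ` ball x r"
proof (rule ccontr)
  let ?U = "z ` ball x r"
  have inj: "inj_on z (cball x r)"
    unfolding inj_on_def
  proof (intro ballI impI)
    fix a b assume ab: "a \<in> cball x r" "b \<in> cball x r" "z a = z b"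
    have "c * dist a b \<le> 0" using low[OF ab(1,2)] ab(3) by simp
    then show "a = b" using c by (simp add: mult_le_0_iff)
  qed
  have "open ?U"
    by (rule invariance_of_domain) (use cont inj in \<open>auto intro: continuous_on_subset inj_on_subset\<close>)
  assume "\<not> ball (z x) (c * r) \<subseteq> ?U"
  then have "ball (z x) (c * r) - ?U \<noteq> {}" by blast
  moreover have "z x \<in> ball (z x) (c * r) \<inter> ?U" using r c by simp
  ultimately obtain q where q: "q \<in> ball (z x) (c * r)" "q \<in> frontier ?U"
    using connected_Int_frontier[OF connected_ball, of "z x" "c * r" ?U] by blast
  have "compact (z ` cball x r)" using cont by (simp add: compact_continuous_image)
  then have "closure ?U \<subseteq> z ` cball x r"
    by (meson ball_subset_cball closure_minimal compact_imp_closed image_mono)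
  moreover have "q \<notin> ?U" using q \<open>open ?U\<close> by (simp add: frontier_def interior_open)
  moreover have "q \<in> closure ?U" using q by (simp add: frontier_def)
  ultimately obtain a where a0: "a \<in> cball x r" "q = z a" by blast
  then have a: "a \<in> cball x r" "a \<notin> ball x r" "q = z a"
    using \<open>q \<notin> ?U\<close> by auto
  then have "dist x a = r" by simp
  moreover have "c * dist x a \<le> dist (z x) (z a)" using low[OF _ a(1)] r by simp
  ultimately show False using q a by simp
qed

theorem proposition3p10:
  fixes \<Omega> :: "(real^'n) set" and L \<alpha> \<delta> M1 M2 \<rho> \<gamma> :: real
  assumes "lipschitz_domain \<Omega> L"
    and "0 < \<alpha>" and "\<alpha> \<le> 1" and "0 < \<delta>" and "0 < M1" and "0 < M2"
    and "injectivity_radius \<Omega> L \<alpha> \<delta> M1 M2 \<rho>"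
    and "0 < \<gamma>" and "\<gamma> < \<rho> / 2"
  shows "\<exists>lam>0. \<forall>y z. admissible \<Omega> \<alpha> \<delta> M1 M2 y \<longrightarrow> admissible \<Omega> \<alpha> \<delta> M1 M2 z \<longrightarrow>
           (\<forall>x\<in>\<Omega>. norm (y x - z x) \<le> lam) \<longrightarrow> P_tilde \<Omega> \<rho> \<gamma> y \<subseteq> P0 \<Omega> \<rho> z"
proof -
  define c where "c = (1/2) * (\<delta> / M1 ^ (CARD('n) - 1))"
  have c: "0 < c" using assms by (simp add: c_def)
  have IR: "\<rho> > 0 \<and>
     (\<forall>y. admissible \<Omega> \<alpha> \<delta> M1 M2 y \<longrightarrow>
       (\<forall>xb\<in>closure \<Omega>. inj_on y (ball xb \<rho> \<inter> \<Omega>) \<and>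
          (\<forall>x1\<in>ball xb \<rho> \<inter> \<Omega>. \<forall>x2\<in>ball xb \<rho> \<inter> \<Omega>.
             c * dist x1 x2 \<le> dist (y x1) (y x2) \<and>
             dist (y x1) (y x2) \<le> M1 * sqrt (1 + L\<^sup>2) * dist x1 x2)))"
    using assms(7) unfolding injectivity_radius_def c_def by simp
  show ?thesis
  proof (intro exI[of _ "c * \<gamma> / 8"] conjI allI impI subsetI)
    show "0 < c * \<gamma> / 8" using c assms by simp
    fix y z x1
    assume ay: "admissible \<Omega> \<alpha> \<delta> M1 M2 y" and az: "admissible \<Omega> \<alpha> \<delta> M1 M2 z"
      and close: "\<forall>x\<in>\<Omega>. norm (y x - z x) \<le> c * \<gamma> / 8"
      and x1: "x1 \<in> P_tilde \<Omega> \<rho> \<gamma> y"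
    obtain x2 where x1\<Omega>: "x1 \<in> \<Omega>" and x2: "x2 \<in> \<Omega>" "infdist x2 (frontier \<Omega>) > \<gamma>"
      "y x1 = y x2" "dist x1 x2 > \<rho> / 2 + \<gamma>"
      using x1 unfolding P_tilde_def by blast
    have B: "ball x2 \<gamma> \<subseteq> \<Omega>" using ball_in_domain[OF x2(1,2)] assms by simp
    have CB: "cball x2 (\<gamma>/2) \<subseteq> ball x2 \<gamma>" using assms by (auto simp: subset_eq)
    have CB2: "cball x2 (\<gamma>/2) \<subseteq> ball x2 \<rho> \<inter> \<Omega>" using CB B assms by (auto simp: subset_eq)
    have contz: "continuous_on \<Omega> z" using az
      unfolding admissible_def C1_alpha_def by (simp add: differentiable_imp_continuous_on)
    have H: "\<forall>a\<in>ball xb \<rho> \<inter> \<Omega>. \<forall>b\<in>ball xb \<rho> \<inter> \<Omega>. c * dist a b \<le> dist (z a) (z b)"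
      if "xb \<in> closure \<Omega>" for xb
      using IR az that by blast
    have x2c: "x2 \<in> closure \<Omega>" using closure_subset x2(1) by blast
    have low: "c * dist a b \<le> dist (z a) (z b)" if "a \<in> cball x2 (\<gamma>/2)" "b \<in> cball x2 (\<gamma>/2)" for a b
    proof -
      have "a \<in> ball x2 \<rho> \<inter> \<Omega>" "b \<in> ball x2 \<rho> \<inter> \<Omega>" using that CB2 by (auto simp del: Int_iff)
      then show ?thesis using H[OF x2c] by blast
    qed
    have cov: "ball (z x2) (c * (\<gamma>/2)) \<subseteq> z ` ball x2 (\<gamma>/2)"
      by (rule cover_ball[OF _ _ low c]) (use contz CB B assms in \<open>auto intro: continuous_on_subset\<close>)
    have e: "z x2 - z x1 = (y x1 - z x1) - (y x2 - z x2)" using x2(3) by (simp add: algebra_simps)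
    have n1: "norm (y x1 - z x1) \<le> c * \<gamma> / 8" using close x1\<Omega> by blast
    have n2: "norm (y x2 - z x2) \<le> c * \<gamma> / 8" using close x2(1) by blast
    have "dist (z x2) (z x1) \<le> norm (y x1 - z x1) + norm (y x2 - z x2)"
      unfolding dist_norm e by (rule norm_triangle_ineq4)
    also have "\<dots> \<le> c * \<gamma> / 4" using n1 n2 by simp
    also have "\<dots> < c * (\<gamma>/2)" using c assms by simp
    finally have "z x1 \<in> z ` ball x2 (\<gamma>/2)" using cov by auto
    then obtain a where a: "a \<in> ball x2 (\<gamma>/2)" "z x1 = z a" by auto
    have "ball x2 (\<gamma>/2) \<subseteq> ball x2 \<gamma>" by (rule subset_ball) (use assms(8) in simp)
    then have "a \<in> \<Omega>" using a(1) B by (meson subsetD)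
    moreover have "dist x1 a > \<rho> / 2"
      using a(1) x2(4) dist_triangle[of x1 x2 a] dist_commute[of a x2] assms(8) by simp
    ultimately show "x1 \<in> P0 \<Omega> \<rho> z" unfolding P0_def using x1\<Omega> a by blast
  qed
qed

end
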